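(* Assume the setting and Assumptions L1, L2 of the context, and define $\delta_1=\min\{\delta_0,(1-e^{-\bar\kappa\sigma})/(2K_1)\}$. Let $U=U^*+F_0$ with $\|F_0\|_{\rm s}<\|F_0\|_{\rm u}\le\delta_1$, and set $F_n=\mathcal R_{n\sigma}(U)-U^*$. Then for every $n\ge0$ such that $\|F_k\|_{\rm u}\le\delta_1$ for all $0\le k\le n$, we have $$\|F_n\|_{\rm s}<\|F_n\|_{\rm u}\quad\text{and}\quad e^{\bar\kappa\sigma/2}\|F_n\|_{\rm u}<\|F_{n+1}\|_{\rm u}<2K_2\|F_n\|_{\rm u}.$$
   Context: $\Gamma$ is a real Banach space, $\sigma>0$, $\mathcal R_\sigma:\Gamma\to\Gamma$ a map with fixed point $U^*$, $\mathcal R_{n\sigma}=(\mathcal R_\sigma)^n$, $\mathcal T_{\sigma,U}$ the Fréchet derivative of $\mathcal R_\sigma$ at $U$. Assumption L1: $\Gamma=E^{\rm u}\oplus E^{\rm s}$, invariant under $\mathcal T_{\sigma,U^*}$, $\dim E^{\rm u}=N$, and for some $\bar\kappa>0$: $\|\mathcal T_{\sigma,U^*}F\|\ge e^{\bar\kappa\sigma}\|F\|$ for $F\in E^{\rm u}$, $\le e^{-\bar\kappa\sigma}\|F\|$ for $F\in E^{\rm s}$. For $F=F^{\rm u}+F^{\rm s}$ ($F^{\rm u}\in E^{\rm u}$, $F^{\rm s}\in E^{\rm s}$), $\|F\|_{\rm s}=\|F^{\rm s}\|$, $\|F\|_{\rm u}=\|F^{\rm u}\|$, and $\|\cdot\|$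 denotes the box norm $\|F\|=\max\{\|F\|_{\rm s},\|F\|_{\rm u}\}$. Assumption L2: there are $\delta_0,K_1,K_2>0$ with $\delta_0K_1\le K_2$ such that for $\|U-U^*\|,\|F\|\le\delta_0$: $\|\mathcal R_\sigma(U+F)-\mathcal R_\sigma(U)-\mathcal T_{\sigma,U}F\|\le K_1\|F\|^2$ and $\|\mathcal T_{\sigma,U}F\|\le K_2\|F\|$. *)

theory Defs
  imports "HOL-Analysis.Analysis"
begin

definition ucomp :: "'a::real_vector set \<Rightarrow> 'a set \<Rightarrow> 'a \<Rightarrow> 'a" where
  "ucomp Eu Es F = (THE x. x \<in> Eu \<and> F - x \<in> Es)"

definition scomp :: "'a::real_vector set \<Rightarrow> 'a set \<Rightarrow> 'a \<Rightarrow> 'a" where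
  "scomp Eu Es F = F - ucomp Eu Es F"

definition direct_sum_decomp :: "'a::real_vector set \<Rightarrow> 'a set \<Rightarrow> bool" where
  "direct_sum_decomp Eu Es \<longleftrightarrow> subspace Eu \<and> subspace Es \<and> Eu \<inter> Es = {0}
     \<and> (\<forall>F. \<exists>u\<in>Eu. \<exists>s\<in>Es. F = u + s)"

end

theory Submission
  imports Defs
begin

lemma aux_ineq: fixes a::real assumes "a > 1" shows "a*a - (1 - 1/(a*a))/2 > a"
proof -
  have "a^2 \<ge> 0" by simp
  hence p: "0 < 2*a^2+2*a+1" using assms by linarith
  have "(a-1)^2*(2*a^2+2*a+1) > 0" using assms p by (intro mult_pos_pos) auto
  hence "2*a^4-2*a^3-a^2+1 > 0" by (simp add: algebra_simps power2_eq_square power3_eq_cube power4_eq_xxxx)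
  hence "(2*a^4-2*a^3-a^2+1)/(2*a*a) > 0" using assms by simp
  moreover have "(2*a^4-2*a^3-a^2+1)/(2*a*a) = a*a - (1 - 1/(a*a))/2 - a" using assms
    by (simp add: field_simps power2_eq_square power3_eq_cube power4_eq_xxxx)
  ultimately show ?thesis by simp
qed

lemma t2_aux: "e*u + 2*(u*((1-e)/2)) = (u::real)" by (simp add: field_simps)

lemma h5_aux: "0 < e \<Longrightarrow> (1 - e)/2 < (1::real)" by simp

lemma ucomp_eq:
  assumes d: "direct_sum_decomp Eu Es" and u: "u \<in> Eu" and s: "s \<in> Es"
  shows "ucomp Eu Es (u + s) = u" "scomp Eu Es (u + s) = s"
proof -
  have sE: "subspace Eu" "subspace Es" "Eu \<inter> Es = {0}" using d unfolding direct_sum_decomp_def by blast+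
  have uniq: "x = u" if "x \<in> Eu \<and> u + s - x \<in> Es" for x
  proof -
    have x1: "x \<in> Eu" and x2: "u + s - x \<in> Es" using that by blast+
    have "u - x \<in> Eu" using subspace_diff[OF sE(1) u x1] .
    moreover have "(u + s - x) - s \<in> Es" using subspace_diff[OF sE(2) x2 s] .
    hence "u - x \<in> Es" by (simp add: algebra_simps)
    ultimately have "u - x \<in> Eu \<inter> Es" by (rule IntI)
    hence "u - x = 0" using sE(3) by simp
    thus ?thesis by simp
  qed
  have ex: "u \<in> Eu \<and> u + s - u \<in> Es" using u s by simp
  have "(THE x. x \<in> Eu \<and> u + s - x \<in> Es) = u"
    by (rule the_equality[where P="\<lambda>x. x \<in> Eu \<and> u + s - x \<in> Es", OF ex uniq])
  thus "ucomp Eu Es (u + s) = u" by (simp add: ucomp_def)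
  thus "scomp Eu Es (u + s) = s" by (simp add: scomp_def)
qed

lemma comp_mem:
  assumes d: "direct_sum_decomp Eu Es"
  shows "ucomp Eu Es F \<in> Eu" "scomp Eu Es F \<in> Es" "F = ucomp Eu Es F + scomp Eu Es F"
proof -
  have "\<exists>u\<in>Eu. \<exists>s\<in>Es. F = u + s" using d unfolding direct_sum_decomp_def by blast
  then obtain u s where us: "u \<in> Eu" "s \<in> Es" "F = u + s" by blast
  have e1: "ucomp Eu Es F = u" and e2: "scomp Eu Es F = s" using ucomp_eq[OF d us(1,2)] us(3) by simp_all
  show "ucomp Eu Es F \<in> Eu" using e1 us(1) by simp
  show "scomp Eu Es F \<in> Es" using e2 us(2) by simp
  show "F = ucomp Eu Es F + scomp Eu Es F" using e1 e2 us(3) by simp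
qed

theorem lemma1:
  fixes R :: "'a::banach \<Rightarrow> 'a" and T :: "'a \<Rightarrow> 'a \<Rightarrow> 'a"
    and Ustar F0 :: 'a and Eu Es :: "'a set" and N :: nat
    and \<sigma> \<kappa> \<delta>0 K1 K2 :: real
  assumes sigma_pos: "\<sigma> > 0"
    and fixpt: "R Ustar = Ustar"
    and deriv: "\<And>U. (R has_derivative T U) (at U)"
    and decomp: "direct_sum_decomp Eu Es"
    and inv_u: "T Ustar ` Eu \<subseteq> Eu" and inv_s: "T Ustar ` Es \<subseteq> Es"
    and fin_dim: "\<exists>B. finite B \<and> span B = Eu" and dimN: "dim Eu = N"
    and kappa_pos: "\<kappa> > 0"
    and expand: "\<And>F. F \<in> Eu \<Longrightarrow> norm (T Ustar F) \<ge> exp (\<kappa> * \<sigma>) * norm F"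
    and contract: "\<And>F. F \<in> Es \<Longrightarrow> norm (T Ustar F) \<le> exp (- \<kappa> * \<sigma>) * norm F"
    and box_norm: "\<And>F. norm F = max (norm (scomp Eu Es F)) (norm (ucomp Eu Es F))"
    and L2_pos: "\<delta>0 > 0" "K1 > 0" "K2 > 0" "\<delta>0 * K1 \<le> K2"
    and L2_rem: "\<And>U F. norm (U - Ustar) \<le> \<delta>0 \<Longrightarrow> norm F \<le> \<delta>0 \<Longrightarrow>
                  norm (R (U + F) - R U - T U F) \<le> K1 * (norm F)\<^sup>2"
    and L2_bnd: "\<And>U F. norm (U - Ustar) \<le> \<delta>0 \<Longrightarrow> norm F \<le> \<delta>0 \<Longrightarrow>
                  norm (T U F) \<le> K2 * norm F"
    and F0: "norm (scomp Eu Es F0) < norm (ucomp Eu Es F0)"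
            "norm (ucomp Eu Es F0) \<le> min \<delta>0 ((1 - exp (- \<kappa> * \<sigma>)) / (2 * K1))"
  shows "\<forall>n. (\<forall>k\<le>n. norm (ucomp Eu Es ((R ^^ k) (Ustar + F0) - Ustar))
                       \<le> min \<delta>0 ((1 - exp (- \<kappa> * \<sigma>)) / (2 * K1))) \<longrightarrow>
           (let Fn = (R ^^ n) (Ustar + F0) - Ustar;
                Fn1 = (R ^^ Suc n) (Ustar + F0) - Ustar
            in norm (scomp Eu Es Fn) < norm (ucomp Eu Es Fn)
               \<and> exp (\<kappa> * \<sigma> / 2) * norm (ucomp Eu Es Fn) < norm (ucomp Eu Es Fn1)
               \<and> norm (ucomp Eu Es Fn1) < 2 * K2 * norm (ucomp Eu Es Fn))"
proof -
  define d1 where "d1 = min \<delta>0 ((1 - exp (- \<kappa> * \<sigma>)) / (2 * K1))"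
  define uc where "uc = ucomp Eu Es"
  define sc where "sc = scomp Eu Es"
  define L where "L = T Ustar"
  have lin: "linear L" unfolding L_def using deriv[of Ustar] has_derivative_linear by blast
  define a where "a = exp (\<kappa> * \<sigma> / 2)"
  have a1: "a > 1" unfolding a_def using kappa_pos sigma_pos by simp
  have Ea: "exp (\<kappa> * \<sigma>) = a * a" unfolding a_def by (simp flip: exp_add)
  have ea: "exp (- \<kappa> * \<sigma>) = 1 / (a * a)" using Ea
    by (simp add: exp_minus field_simps)
  have step: "sc' G < uc' G \<and> a * uc' F < uc' G \<and> uc' G < 2 * K2 * uc' F" 
    if "sc' F < uc' F" "uc' F \<le> d1" "G = R (Ustar + F) - Ustar"
      "uc' = (\<lambda>x. norm (uc x))" "sc' = (\<lambda>x. norm (sc x))" for F G uc' sc'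
  proof -
    define u where "u = uc' F"
    define s where "s = sc' F"
    define x where "x = uc F"
    define y where "y = sc F"
    have xy: "x \<in> Eu" "y \<in> Es" "F = x + y" using comp_mem[OF decomp, of F]
      unfolding x_def y_def uc_def sc_def by auto
    have nx: "norm x = u" and ny: "norm y = s" unfolding x_def y_def u_def s_def using that by auto
    have s0: "s \<ge> 0" unfolding s_def using that by simp
    have su: "s < u" using that unfolding s_def u_def by simp
    have u0: "u > 0" using s0 su by simp
    have nF: "norm F = u" using box_norm[of F] su unfolding u_def s_def that uc_def sc_def by simp
    have ud0: "u \<le> \<delta>0" and ud1: "u \<le> (1 - 1/(a*a)) / (2 * K1)"
      using that(2) unfolding d1_def u_def ea by auto
    have K1u: "K1 * u \<le> (1 - 1/(a*a)) / 2" using ud1 L2_pos(2) by (simp add: field_simps)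
    define r where "r = G - L F"
    have GR: "G = R (Ustar + F) - R Ustar - L F + L F" using that(3) fixpt by simp
    have nr: "norm r \<le> K1 * u^2" unfolding r_def L_def using L2_rem[of Ustar F] nF ud0 L2_pos that(3) fixpt
      by simp
    define ru where "ru = uc r"
    define rs where "rs = sc r"
    have rr: "ru \<in> Eu" "rs \<in> Es" "r = ru + rs" using comp_mem[OF decomp, of r]
      unfolding ru_def rs_def uc_def sc_def by auto
    have nru: "norm ru \<le> norm r" "norm rs \<le> norm r" using box_norm[of r]
      unfolding ru_def rs_def uc_def sc_def by auto
    have LF: "L F = L x + L y" using xy(3) lin by (simp add: linear_add)
    have G: "G = (L x + ru) + (L y + rs)" using rr(3) LF unfolding r_def by (simp add: algebra_simps)
    have sub: "subspace Eu" "subspace Es" using decomp by (auto simp: direct_sum_decomp_def)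
    have m1: "L x + ru \<in> Eu" using inv_u xy(1) rr(1) sub(1) unfolding L_def by (auto intro: subspace_add)
    have m2: "L y + rs \<in> Es" using inv_s xy(2) rr(2) sub(2) unfolding L_def by (auto intro: subspace_add)
    have ucG: "uc G = L x + ru" and scG: "sc G = L y + rs"
      using ucomp_eq[OF decomp m1 m2] G unfolding uc_def sc_def by auto
    have Lx1: "norm (L x) \<ge> a * a * u" using expand[OF xy(1)] nx Ea unfolding L_def by simp
    have Lx2: "norm (L x) \<le> K2 * u" using L2_bnd[of Ustar x] nx ud0 L2_pos unfolding L_def by simp
    have Ly: "norm (L y) \<le> 1/(a*a) * s" using contract[OF xy(2)] ny ea unfolding L_def by simp
    have KK: "K1 * u^2 \<le> u * ((1 - 1/(a*a)) / 2)" using K1u u0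
      by (metis mult.commute mult.left_commute mult_left_mono less_imp_le power2_eq_square)
    have lowG: "uc' G \<ge> a * a * u - K1 * u^2"
      using norm_diff_ineq[of "L x" ru] Lx1 nru(1) nr ucG that(4) by simp
    have upG: "uc' G \<le> K2 * u + K1 * u^2"
      using norm_triangle_ineq[of "L x" ru] Lx2 nru(1) nr ucG that(4) by simp
    have supG: "sc' G \<le> 1/(a*a) * s + K1 * u^2"
      using norm_triangle_ineq[of "L y" rs] Ly nru(2) nr scG that(5) by simp
    have aa: "a * a > 1" using a1 by (metis less_1_mult)
    have ia: "0 < 1/(a*a)" "1/(a*a) < 1" using aa by auto
    have t1: "1/(a*a) * s < 1/(a*a) * u" using su ia by (intro mult_strict_left_mono) auto
    have t2: "1/(a*a) * u + 2 * (u * ((1 - 1/(a*a)) / 2)) = u" by (rule t2_aux)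
    have "1 * u \<le> (a * a) * u" using aa u0 by (intro mult_right_mono) auto
    hence t3: "u \<le> a * a * u" by simp
    have A: "sc' G < uc' G" using lowG supG t1 t2 t3 KK by linarith
    have t4: "a * u < (a*a - (1 - 1/(a*a))/2) * u" using aux_ineq[OF a1] u0 by (rule mult_strict_right_mono)
    have t4': "(a*a - (1 - 1/(a*a))/2) * u = a * a * u - u * ((1 - 1/(a*a))/2)" by (simp only: algebra_simps)
    have B: "a * uc' F < uc' G" using lowG KK t4 t4' unfolding u_def[symmetric] by linarith
    have "a * a * u \<le> K2 * u" using Lx1 Lx2 by linarith
    hence K2g: "K2 \<ge> a * a" using u0 by simp
    have h5a: "(1 - 1/(a*a))/2 < 1" by (rule h5_aux[OF ia(1)])
    have h5: "(1 - 1/(a*a))/2 < K2" using h5a aa K2g by linarith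
    have t5: "K1 * u < K2" by (rule le_less_trans[OF K1u h5])
    have t6: "K1 * u^2 < K2 * u" using t5 u0 by (simp add: power2_eq_square)
    have C: "uc' G < 2 * K2 * uc' F" using upG t6 unfolding u_def[symmetric] by simp
    show ?thesis using A B C by simp
  qed
  define Fs where "Fs n = (R ^^ n) (Ustar + F0) - Ustar" for n
  have Fsuc: "Fs (Suc n) = R (Ustar + Fs n) - Ustar" for n unfolding Fs_def by simp
  have stp: "norm (sc (Fs (Suc n))) < norm (uc (Fs (Suc n))) \<and>
        a * norm (uc (Fs n)) < norm (uc (Fs (Suc n))) \<and> norm (uc (Fs (Suc n))) < 2 * K2 * norm (uc (Fs n))"
    if "norm (sc (Fs n)) < norm (uc (Fs n))" "norm (uc (Fs n)) \<le> d1" for n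
    using step[where uc'="\<lambda>x. norm (uc x)" and sc'="\<lambda>x. norm (sc x)", OF that Fsuc refl refl] .
  have inv: "(\<forall>k\<le>n. norm (uc (Fs k)) \<le> d1) \<longrightarrow> norm (sc (Fs n)) < norm (uc (Fs n))" for n
  proof (induction n)
    case 0
    then show ?case using F0(1) unfolding Fs_def uc_def sc_def by simp
  next
    case (Suc n)
    show ?case
    proof
      assume h: "\<forall>k\<le>Suc n. norm (uc (Fs k)) \<le> d1"
      have h1: "\<forall>k\<le>n. norm (uc (Fs k)) \<le> d1" using h by simp
      have A: "norm (sc (Fs n)) < norm (uc (Fs n))" using Suc.IH h1 by (rule mp)
      have B: "norm (uc (Fs n)) \<le> d1" using h by simp
      show "norm (sc (Fs (Suc n))) < norm (uc (Fs (Suc n)))" using stp[OF A B] by (rule conjunct1)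
    qed
  qed
  show ?thesis
  proof (intro allI impI)
    fix n
    assume h: "\<forall>k\<le>n. norm (ucomp Eu Es ((R ^^ k) (Ustar + F0) - Ustar)) \<le> min \<delta>0 ((1 - exp (- \<kappa> * \<sigma>)) / (2 * K1))"
    have h': "\<forall>k\<le>n. norm (uc (Fs k)) \<le> d1" using h unfolding Fs_def uc_def d1_def .
    have i: "norm (sc (Fs n)) < norm (uc (Fs n))" using inv h' by blast
    have "norm (uc (Fs n)) \<le> d1" using h' by simp
    from stp[OF i this] i
    show "let Fn = (R ^^ n) (Ustar + F0) - Ustar; Fn1 = (R ^^ Suc n) (Ustar + F0) - Ustar
            in norm (scomp Eu Es Fn) < norm (ucomp Eu Es Fn)
               \<and> exp (\<kappa> * \<sigma> / 2) * norm (ucomp Eu Es Fn) < norm (ucomp Eu Es Fn1)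
               \<and> norm (ucomp Eu Es Fn1) < 2 * K2 * norm (ucomp Eu Es Fn)"
      unfolding Let_def Fs_def uc_def sc_def a_def by (simp only:)
  qed
qed

end
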